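(* Let $k\in\mathbb{N}$ and let $B$ be the $3k\times 2k$ matrix $B=\begin{bmatrix}2I_{2k}\\ -2\,I_k\otimes[1,1]\end{bmatrix}$. Let $A_1,A_2$ be $3k\times 2k$ real matrices such that (1) $A_1\ge0$ and $A_2\ge0$ entrywise; (2) for all $i\in[3k]$ and $j\in[k]$, $A_2(i,2j-1)=A_2(i,2j)$; (3) every row of $A_1+A_2/2$ has entry sum at most $1$. Then $B+A_1-A_2$ has rank $2k$.
   Context: $I_m$ is the $m\times m$ identity matrix; $I_k\otimes[1,1]$ is the $k\times 2k$ matrix whose $j$-th row has entries $1$ in columns $2j-1$ and $2j$ and $0$ elsewhere. *)

theory Defs
  imports "Jordan_Normal_Form.DL_Rank"
begin

text \<open>The 3k x 2k matrix B = [2 I_{2k}; -2 (I_k tensor [1,1])], 0-indexed: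
  rows i < 2k carry 2 on the diagonal; row 2k+j (j < k) carries -2 in columns 2j and 2j+1.\<close>
definition Bmat :: "nat \<Rightarrow> real mat" where
  "Bmat k = mat (3*k) (2*k) (\<lambda>(i,j).
      if i < 2*k then (if i = j then 2 else 0)
      else (if j div 2 = i - 2*k then -2 else 0))"

end

theory Submission
  imports Defs
begin


lemma pair_sum: "(\<Sum>j<2*k. g j) = (\<Sum>l<k. g (2*l) + g (2*l+1))" for g :: "nat \<Rightarrow> real"
  by (induction k) (simp_all add: sum.lessThan_Suc_shift lessThan_Suc)

lemma core:
  fixes k :: nat and a1 a2 :: "nat \<Rightarrow> nat \<Rightarrow> real" and x :: "nat \<Rightarrow> real"
  defines "b \<equiv> \<lambda>i j. if i < 2*k then (if i = j then 2 else 0)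
      else (if j div 2 = i - 2*k then -2 else 0 :: real)"
  assumes nn: "\<forall>i<3*k. \<forall>j<2*k. a1 i j \<ge> 0 \<and> a2 i j \<ge> 0"
    and pr: "\<forall>i<3*k. \<forall>j<k. a2 i (2*j) = a2 i (2*j+1)"
    and rs: "\<forall>i<3*k. (\<Sum>j<2*k. a1 i j + a2 i j / 2) \<le> 1"
    and eq: "\<forall>i<3*k. (\<Sum>j<2*k. (b i j + a1 i j - a2 i j) * x j) = 0"
    and j: "j < 2*k"
  shows "x j = 0"
proof -
  define f where "f t = (if t < 2*k then x t else x (2*(t-2*k)) + x (2*(t-2*k)+1))" for t
  have k0: "k > 0" using j by simp
  define T where "T = Max ((\<lambda>t. \<bar>f t\<bar>) ` {..<3*k})"
  have fin: "finite ((\<lambda>t. \<bar>f t\<bar>) ` {..<3*k})" by simp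
  have ne: "(\<lambda>t. \<bar>f t\<bar>) ` {..<3*k} \<noteq> {}"
  proof -
    have "0 \<in> {..<3*k}" using k0 by simp
    thus ?thesis by blast
  qed
  have fT: "\<bar>f t\<bar> \<le> T" if "t < 3*k" for t
    unfolding T_def using fin that by (intro Max_ge) auto
  obtain t0 where t0: "t0 < 3*k" "\<bar>f t0\<bar> = T"
    using Max_in[OF fin ne] unfolding T_def by auto
  have xT: "\<bar>x j'\<bar> \<le> T" if "j' < 2*k" for j'
    using fT[of j'] that by (simp add: f_def)
  have pT: "\<bar>x (2*l) + x (2*l+1)\<bar> \<le> T" if "l < k" for l
    using fT[of "2*k+l"] that by (simp add: f_def)
  have E: "\<bar>\<Sum>j<2*k. b t0 j * x j\<bar> = 2 * \<bar>f t0\<bar>"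
  proof (cases "t0 < 2*k")
    case True
    have "(\<Sum>j<2*k. b t0 j * x j) = (\<Sum>j<2*k. if j = t0 then 2 * x j else 0)"
      by (rule sum.cong) (auto simp: b_def True)
    also have "\<dots> = 2 * x t0" using True by simp
    finally show ?thesis using True by (simp add: f_def abs_mult)
  next
    case False
    have "(\<Sum>j<2*k. b t0 j * x j) = (\<Sum>l<k. b t0 (2*l) * x (2*l) + b t0 (2*l+1) * x (2*l+1))"
      by (rule pair_sum)
    also have "\<dots> = (\<Sum>l<k. if l = t0 - 2*k then -2 * (x (2*l) + x (2*l+1)) else 0)"
      by (rule sum.cong) (auto simp: b_def False)
    also have "\<dots> = -2 * (x (2*(t0-2*k)) + x (2*(t0-2*k)+1))" using False t0 by (simp add: less_diff_conv2)
    finally show ?thesis using False by (simp add: f_def abs_if)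
  qed
  have A1: "\<bar>\<Sum>j<2*k. a1 t0 j * x j\<bar> \<le> (\<Sum>j<2*k. a1 t0 j) * T"
  proof -
    have "\<bar>\<Sum>j<2*k. a1 t0 j * x j\<bar> \<le> (\<Sum>j<2*k. \<bar>a1 t0 j * x j\<bar>)" by (rule sum_abs)
    also have "\<dots> \<le> (\<Sum>j<2*k. a1 t0 j * T)"
      using nn t0(1) xT by (intro sum_mono) (auto simp: abs_mult intro: mult_left_mono)
    finally show ?thesis by (simp add: sum_distrib_right)
  qed
  have A2: "\<bar>\<Sum>j<2*k. a2 t0 j * x j\<bar> \<le> (\<Sum>j<2*k. a2 t0 j / 2) * T"
  proof -
    have "(\<Sum>j<2*k. a2 t0 j * x j) = (\<Sum>l<k. a2 t0 (2*l) * x (2*l) + a2 t0 (2*l+1) * x (2*l+1))"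
      by (rule pair_sum)
    also have "\<dots> = (\<Sum>l<k. a2 t0 (2*l) * (x (2*l) + x (2*l+1)))"
      using pr t0(1) by (intro sum.cong) (auto simp: algebra_simps)
    finally have 1: "(\<Sum>j<2*k. a2 t0 j * x j) = \<dots>" .
    have 2: "(\<Sum>j<2*k. a2 t0 j / 2) = (\<Sum>l<k. a2 t0 (2*l))"
      using pr t0(1) by (subst pair_sum) (intro sum.cong, auto)
    have "\<bar>\<Sum>l<k. a2 t0 (2*l) * (x (2*l) + x (2*l+1))\<bar> \<le> (\<Sum>l<k. \<bar>a2 t0 (2*l) * (x (2*l) + x (2*l+1))\<bar>)"
      by (rule sum_abs)
    also have "\<dots> \<le> (\<Sum>l<k. a2 t0 (2*l) * T)"
      using nn t0(1) pT by (intro sum_mono) (auto simp: abs_mult intro: mult_left_mono)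
    finally show ?thesis using 1 2 by (simp add: sum_distrib_right)
  qed
  have "(\<Sum>j<2*k. b t0 j * x j) = (\<Sum>j<2*k. a2 t0 j * x j) - (\<Sum>j<2*k. a1 t0 j * x j)"
    using eq t0(1) by (simp add: algebra_simps sum.distrib sum_subtractf)
  hence "2 * T \<le> (\<Sum>j<2*k. a1 t0 j) * T + (\<Sum>j<2*k. a2 t0 j / 2) * T"
    using E A1 A2 t0(2) by linarith
  also have "\<dots> = (\<Sum>j<2*k. a1 t0 j + a2 t0 j / 2) * T" by (simp add: sum.distrib algebra_simps)
  also have "\<dots> \<le> 1 * T"
    using rs t0(1) fT[OF t0(1)] by (intro mult_right_mono) auto
  finally have "T \<le> 0" by simp
  thus ?thesis using xT[OF j] by simp
qed

lemma kernel0: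
  fixes k :: nat and A1 A2 :: "real mat" and v :: "real vec"
  assumes c1: "A1 \<in> carrier_mat (3*k) (2*k)" and c2: "A2 \<in> carrier_mat (3*k) (2*k)"
    and "\<forall>i<3*k. \<forall>j<2*k. A1 $$ (i,j) \<ge> 0 \<and> A2 $$ (i,j) \<ge> 0"
    and "\<forall>i<3*k. \<forall>j<k. A2 $$ (i, 2*j) = A2 $$ (i, 2*j+1)"
    and "\<forall>i<3*k. (\<Sum>j<2*k. A1 $$ (i,j) + A2 $$ (i,j) / 2) \<le> 1"
    and z: "\<forall>i<3*k. (\<Sum>j<2*k. (Bmat k + A1 - A2) $$ (i,j) * v $ j) = 0"
    and j: "j < 2*k"
  shows "v $ j = 0"
proof (rule core[of k "\<lambda>i j. A1 $$ (i,j)" "\<lambda>i j. A2 $$ (i,j)" "\<lambda>j. v $ j"])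
  show "\<forall>i<3*k. (\<Sum>j<2*k. ((if i < 2*k then (if i = j then 2 else 0)
      else (if j div 2 = i - 2*k then -2 else 0 :: real)) + A1 $$ (i,j) - A2 $$ (i,j)) * v $ j) = 0"
  proof (intro allI impI)
    fix i assume i: "i < 3*k"
    have "(\<Sum>j<2*k. ((if i < 2*k then (if i = j then 2 else 0)
      else (if j div 2 = i - 2*k then -2 else 0 :: real)) + A1 $$ (i,j) - A2 $$ (i,j)) * v $ j)
      = (\<Sum>j<2*k. (Bmat k + A1 - A2) $$ (i,j) * v $ j)"
      using i c1 c2 by (intro sum.cong) (auto simp: Bmat_def)
    thus "(\<Sum>j<2*k. ((if i < 2*k then (if i = j then 2 else 0)
      else (if j div 2 = i - 2*k then -2 else 0 :: real)) + A1 $$ (i,j) - A2 $$ (i,j)) * v $ j) = 0"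
      using z i by simp
  qed
qed (use assms in auto)

theorem lemma17:
  fixes k :: nat and A1 A2 :: "real mat"
  assumes "A1 \<in> carrier_mat (3*k) (2*k)" and "A2 \<in> carrier_mat (3*k) (2*k)"
    and "\<forall>i<3*k. \<forall>j<2*k. A1 $$ (i,j) \<ge> 0 \<and> A2 $$ (i,j) \<ge> 0"
    and "\<forall>i<3*k. \<forall>j<k. A2 $$ (i, 2*j) = A2 $$ (i, 2*j+1)"
    and "\<forall>i<3*k. (\<Sum>j<2*k. A1 $$ (i,j) + A2 $$ (i,j) / 2) \<le> 1"
  shows "vec_space.rank (3*k) (Bmat k + A1 - A2) = 2*k"
proof -
  interpret V: vec_space "TYPE(real)" "3*k" .
  define M where "M = Bmat k + A1 - A2"
  have cM: "M \<in> carrier_mat (3*k) (2*k)" proof -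
    have "Bmat k \<in> carrier_mat (3*k) (2*k)" by (simp add: Bmat_def)
    thus ?thesis using assms(1,2) unfolding M_def by (meson add_carrier_mat minus_carrier_mat)
  qed
  have ker: "v $ j = 0" if "\<forall>i<3*k. (\<Sum>j<2*k. M $$ (i,j) * v $ j) = 0" "j < 2*k" for v j
    using kernel0[OF assms, of v j] that unfolding M_def by blast
  have mv: "(M *\<^sub>v v) $ i = (\<Sum>j<2*k. M $$ (i,j) * v $ j)" if "i < 3*k" "v \<in> carrier_vec (2*k)" for i v
    using cM that by (auto simp: scalar_prod_def lessThan_atLeast0 intro!: sum.cong)
  have dist: "distinct (cols M)"
  proof (rule ccontr)
    assume "\<not> distinct (cols M)"
    then obtain a b where ab: "a < 2*k" "b < 2*k" "a \<noteq> b" "col M a = col M b"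
      using cM by (auto simp: distinct_conv_nth)
    define v :: "real vec" where "v = vec (2*k) (\<lambda>l. if l = a then 1 else if l = b then -1 else 0)"
    have "v $ a = 0"
    proof (rule ker)
      show "\<forall>i<3*k. (\<Sum>j<2*k. M $$ (i,j) * v $ j) = 0"
      proof (intro allI impI)
        fix i assume i: "i < 3*k"
        have "(\<Sum>j<2*k. M $$ (i,j) * v $ j) = (\<Sum>j<2*k. (if j = a then M $$ (i,a) else 0) - (if j = b then M $$ (i,b) else 0))"
          using ab by (intro sum.cong) (auto simp: v_def)
        also have "\<dots> = M $$ (i,a) - M $$ (i,b)" using ab by (simp add: sum_subtractf)
        also have "\<dots> = col M a $ i - col M b $ i" using cM i ab(1,2) by simp
        also have "\<dots> = 0" using ab(4) by simp
        finally show "(\<Sum>j<2*k. M $$ (i,j) * v $ j) = 0" .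
      qed
    qed (use ab in auto)
    thus False using ab by (simp add: v_def)
  qed
  have indpt: "\<not> V.lin_dep (set (cols M))"
  proof
    assume "V.lin_dep (set (cols M))"
    then obtain v where v: "v \<in> carrier_vec (2*k)" "v \<noteq> 0\<^sub>v (2*k)" "M *\<^sub>v v = 0\<^sub>v (3*k)"
      using V.lin_depE[OF cM _ dist] by blast
    have "v $ j = 0" if "j < 2*k" for j
      using ker[OF _ that] mv[OF _ v(1)] v(3) by (metis index_zero_vec(1))
    hence "v = 0\<^sub>v (2*k)" using v(1) by (intro eq_vecI) auto
    thus False using v(2) by simp
  qed
  show ?thesis using V.lin_indpt_full_rank[OF cM dist indpt] unfolding M_def .
qed

end
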